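(* Let $\sigma_0$ be a strictly positive random variable with $L(x):=1/\mathbb{P}(\sigma_0>x)$ slowly varying at infinity (i.e. $\lim_{u\to\infty}L(uv)/L(u)=1$ for every $v>0$), and let $Y=\{Y_n\}_{n\in\mathbb{N}}$ be i.i.d. with the law of $\sigma_0$. Let $h_t$ be any function with $h_t\to\infty$, $h_t^2=o(r_t)$, and such that, for all sufficiently large $t$, \[ L(\ell_t/h_t^3)>L(\ell_t)(1-1/h_t)\quad\text{and}\quad L(\ell_th_t^3)<L(\ell_t)(1+1/h_t).\] Then, as $t\to\infty$, \[ \mathbb{P}\Big(Y_{n_{\ell_t}}>\frac{th_t^2}{r_t}\Big)\to1.\]
   Context: $\ell_t:=\min\{s\ge0: sL(s)\ge t\}$ and $r_t:=L(\ell_t)$. For $n\ge0$, $M_n:=\max\{Y_i: i\le\lfloor n\rfloor\}$. For a level $l>0$, $n_l:=\min\{n\in\mathbb{N}: M_n>l\}$ is the index of the first exceedance of $l$. *)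

theory Defs
  imports "HOL-Probability.Probability" "HOL-Library.Landau_Symbols"
begin

definition tailL :: "'a measure \<Rightarrow> ('a \<Rightarrow> real) \<Rightarrow> real \<Rightarrow> real" where
  "tailL M \<sigma> x = 1 / measure M {\<omega> \<in> space M. \<sigma> \<omega> > x}"

definition slowly_varying :: "(real \<Rightarrow> real) \<Rightarrow> bool" where
  "slowly_varying L \<longleftrightarrow> (\<forall>v>0. ((\<lambda>u. L (u * v) / L u) \<longlongrightarrow> 1) at_top)"

definition ell :: "(real \<Rightarrow> real) \<Rightarrow> real \<Rightarrow> real" where
  "ell L t = Inf {s. s \<ge> 0 \<and> s * L s \<ge> t}"

definition rr :: "(real \<Rightarrow> real) \<Rightarrow> real \<Rightarrow> real" where
  "rr L t = L (ell L t)"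

definition maxY :: "(nat \<Rightarrow> 'a \<Rightarrow> real) \<Rightarrow> nat \<Rightarrow> 'a \<Rightarrow> real" where
  "maxY Y n \<omega> = Max ((\<lambda>i. Y i \<omega>) ` {..n})"

definition first_exc :: "(nat \<Rightarrow> 'a \<Rightarrow> real) \<Rightarrow> real \<Rightarrow> 'a \<Rightarrow> nat" where
  "first_exc Y l \<omega> = (LEAST n. maxY Y n \<omega> > l)"

end

theory Submission
  imports Defs
begin

lemma meas_E:
  fixes M :: "'a measure" and Y :: "nat \<Rightarrow> 'a \<Rightarrow> real"
  assumes "\<And>n. Y n \<in> borel_measurable M"
  shows "{\<omega> \<in> space M. Y (first_exc Y l \<omega>) \<omega> > c} \<in> sets M"
proof -
  have [measurable]: "\<And>n. Y n \<in> borel_measurable M" by fact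
  have [measurable]: "\<And>n. maxY Y n \<in> borel_measurable M"
    unfolding maxY_def by measurable
  have [measurable]: "first_exc Y l \<in> measurable M (count_space UNIV)"
    unfolding first_exc_def by measurable
  have "(\<lambda>\<omega>. Y (first_exc Y l \<omega>) \<omega>) \<in> borel_measurable M"
    by (rule measurable_compose_countable) measurable
  then show ?thesis by measurable
qed

lemma prob_Dn:
  fixes M :: "'a measure" and \<sigma>0 :: "'a \<Rightarrow> real" and Y :: "nat \<Rightarrow> 'a \<Rightarrow> real"
  assumes ps: "prob_space M"
    and s: "\<sigma>0 \<in> borel_measurable M"
    and Ym: "\<And>n. Y n \<in> borel_measurable M"
    and ind: "prob_space.indep_vars M (\<lambda>_. borel) Y UNIV"
    and dist: "\<And>n. distr M borel (Y n) = distr M borel \<sigma>0"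
  shows "measure M {\<omega> \<in> space M. (\<forall>i<n. Y i \<omega> \<le> l) \<and> Y n \<omega> > x}
     = (1 - measure M {\<omega> \<in> space M. \<sigma>0 \<omega> > l}) ^ n * measure M {\<omega> \<in> space M. \<sigma>0 \<omega> > x}"
proof -
  interpret prob_space M by fact
  define A where "A i = (if i < n then {..l} else {x<..})" for i
  have eq: "{\<omega> \<in> space M. (\<forall>i<n. Y i \<omega> \<le> l) \<and> Y n \<omega> > x} = (\<Inter>i\<in>{..n}. Y i -` A i \<inter> space M)"
  proof (intro set_eqI iffI)
    fix \<omega> assume "\<omega> \<in> {\<omega> \<in> space M. (\<forall>i<n. Y i \<omega> \<le> l) \<and> Y n \<omega> > x}"
    then show "\<omega> \<in> (\<Inter>i\<in>{..n}. Y i -` A i \<inter> space M)"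
      unfolding A_def by (auto simp: not_less)
  next
    fix \<omega> assume a: "\<omega> \<in> (\<Inter>i\<in>{..n}. Y i -` A i \<inter> space M)"
    have sp: "\<omega> \<in> space M" using a by auto
    have mem: "Y i \<omega> \<in> A i" if "i \<le> n" for i using a that by auto
    have "Y i \<omega> \<le> l" if "i < n" for i using mem[of i] that unfolding A_def by auto
    moreover have "Y n \<omega> > x" using mem[of n] unfolding A_def by auto
    ultimately show "\<omega> \<in> {\<omega> \<in> space M. (\<forall>i<n. Y i \<omega> \<le> l) \<and> Y n \<omega> > x}" using sp by auto
  qed
  have pr: "prob (Y i -` B \<inter> space M) = prob (\<sigma>0 -` B \<inter> space M)" if "B \<in> sets borel" for i B
  proof -
    have "prob (Y i -` B \<inter> space M) = measure (distr M borel (Y i)) B"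
      using that Ym by (simp add: measure_distr)
    also have "\<dots> = measure (distr M borel \<sigma>0) B" by (simp add: dist)
    also have "\<dots> = prob (\<sigma>0 -` B \<inter> space M)" using that s by (simp add: measure_distr)
    finally show ?thesis .
  qed
  have "prob (\<Inter>i\<in>{..n}. Y i -` A i \<inter> space M) = (\<Prod>i\<in>{..n}. prob (Y i -` A i \<inter> space M))"
    by (rule indep_varsD[OF ind]) (auto simp: A_def)
  also have "\<dots> = (\<Prod>i\<in>{..n}. prob (\<sigma>0 -` A i \<inter> space M))"
    by (rule prod.cong) (auto simp: A_def intro!: pr)
  also have "\<dots> = (\<Prod>i<n. prob (\<sigma>0 -` {..l} \<inter> space M)) * prob (\<sigma>0 -` {x<..} \<inter> space M)"
    by (simp add: lessThan_Suc_atMost[symmetric] A_def)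
  also have "prob (\<sigma>0 -` {..l} \<inter> space M) = 1 - measure M {\<omega> \<in> space M. \<sigma>0 \<omega> > l}"
  proof -
    have "\<sigma>0 -` {..l} \<inter> space M = space M - {\<omega> \<in> space M. \<sigma>0 \<omega> > l}" by auto
    moreover have "{\<omega> \<in> space M. \<sigma>0 \<omega> > l} \<in> events" using s by measurable
    ultimately show ?thesis by (simp add: prob_compl)
  qed
  also have "\<sigma>0 -` {x<..} \<inter> space M = {\<omega> \<in> space M. \<sigma>0 \<omega> > x}" by auto
  finally show ?thesis using eq by simp
qed

lemma first_exc_eq:
  assumes "\<forall>i<n. Y i \<omega> \<le> l" "Y n \<omega> > l"
  shows "first_exc Y l \<omega> = n"
  unfolding first_exc_def
proof (rule Least_equality)
  show "l < maxY Y n \<omega>" unfolding maxY_def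
    using assms(2) by (subst Max_gr_iff) auto
next
  fix m assume "l < maxY Y m \<omega>"
  then obtain i where "i \<le> m" "Y i \<omega> > l" unfolding maxY_def by (subst (asm) Max_gr_iff) auto
  then show "n \<le> m" using assms(1) by (meson leI less_le_trans not_le)
qed

lemma lower_bound:
  fixes M :: "'a measure" and \<sigma>0 :: "'a \<Rightarrow> real" and Y :: "nat \<Rightarrow> 'a \<Rightarrow> real"
  assumes ps: "prob_space M"
    and s: "\<sigma>0 \<in> borel_measurable M"
    and Ym: "\<And>n. Y n \<in> borel_measurable M"
    and ind: "prob_space.indep_vars M (\<lambda>_. borel) Y UNIV"
    and dist: "\<And>n. distr M borel (Y n) = distr M borel \<sigma>0"
    and lx: "l \<le> x" and cx: "c \<le> x"
    and pos: "measure M {\<omega> \<in> space M. \<sigma>0 \<omega> > l} > 0"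
  shows "measure M {\<omega> \<in> space M. Y (first_exc Y l \<omega>) \<omega> > c}
     \<ge> measure M {\<omega> \<in> space M. \<sigma>0 \<omega> > x} / measure M {\<omega> \<in> space M. \<sigma>0 \<omega> > l}"
proof -
  interpret prob_space M by fact
  define p where "p = measure M {\<omega> \<in> space M. \<sigma>0 \<omega> > l}"
  define q where "q = measure M {\<omega> \<in> space M. \<sigma>0 \<omega> > x}"
  define D where "D n = {\<omega> \<in> space M. (\<forall>i<n. Y i \<omega> \<le> l) \<and> Y n \<omega> > x}" for n
  have [measurable]: "\<And>n. Y n \<in> borel_measurable M" by fact
  have Dm: "range D \<subseteq> sets M" unfolding D_def by auto
  have dj0: "D m \<inter> D n = {}" if "m < n" for m n
  proof -
    { fix \<omega> assume "\<omega> \<in> D m" "\<omega> \<in> D n"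
      then have "Y m \<omega> > x" "Y m \<omega> \<le> l" using that unfolding D_def by auto
      then have False using lx by linarith }
    then show ?thesis by blast
  qed
  have dj: "disjoint_family D"
    unfolding disjoint_family_on_def
  proof (intro ballI impI)
    fix m n :: nat assume "m \<noteq> n"
    then consider "m < n" | "n < m" by linarith
    then show "D m \<inter> D n = {}" using dj0[of m n] dj0[of n m] by (cases, auto)
  qed
  have s1: "(\<lambda>n. measure M (D n)) sums measure M (\<Union>n. D n)"
    by (rule finite_measure_UNION[OF Dm dj])
  have "p \<le> 1" unfolding p_def by simp
  have s2: "(\<lambda>n. (1 - p) ^ n * q) sums (1 / (1 - (1 - p)) * q)"
    by (rule sums_mult2, rule geometric_sums) (use pos \<open>p \<le> 1\<close> in \<open>auto simp: p_def\<close>)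
  have "(\<lambda>n. measure M (D n)) = (\<lambda>n. (1 - p) ^ n * q)"
    unfolding D_def p_def q_def by (rule ext, rule prob_Dn[OF ps s Ym ind dist])
  with s1 have "(\<lambda>n. (1 - p) ^ n * q) sums measure M (\<Union>n. D n)" by simp
  from sums_unique2[OF this s2] have eqU: "measure M (\<Union>n. D n) = q / p" by simp
  have sub: "(\<Union>n. D n) \<subseteq> {\<omega> \<in> space M. Y (first_exc Y l \<omega>) \<omega> > c}"
  proof
    fix \<omega> assume "\<omega> \<in> (\<Union>n. D n)"
    then obtain n where "\<omega> \<in> space M" "\<forall>i<n. Y i \<omega> \<le> l" "Y n \<omega> > x" unfolding D_def by auto
    moreover have "first_exc Y l \<omega> = n"
      by (rule first_exc_eq) (use calculation lx in auto)
    ultimately show "\<omega> \<in> {\<omega> \<in> space M. Y (first_exc Y l \<omega>) \<omega> > c}" using cx by auto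
  qed
  have "measure M (\<Union>n. D n) \<le> measure M {\<omega> \<in> space M. Y (first_exc Y l \<omega>) \<omega> > c}"
    by (rule finite_measure_mono[OF sub meas_E[OF Ym]])
  with eqU show ?thesis by (simp add: p_def q_def)
qed

lemma tail_pos:
  fixes M :: "'a measure" and \<sigma>0 :: "'a \<Rightarrow> real"
  assumes ps: "prob_space M" and s: "\<sigma>0 \<in> borel_measurable M"
    and sv: "slowly_varying (tailL M \<sigma>0)"
  shows "measure M {\<omega> \<in> space M. \<sigma>0 \<omega> > x} > 0"
proof -
  interpret prob_space M by fact
  have "((\<lambda>u. tailL M \<sigma>0 (u * 1) / tailL M \<sigma>0 u) \<longlongrightarrow> 1) at_top"
  proof -
    have "\<forall>v>0. ((\<lambda>u. tailL M \<sigma>0 (u * v) / tailL M \<sigma>0 u) \<longlongrightarrow> 1) at_top"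
      using sv unfolding slowly_varying_def .
    then show ?thesis by (rule allE[of _ 1]) simp
  qed
  then have "eventually (\<lambda>u. tailL M \<sigma>0 (u * 1) / tailL M \<sigma>0 u > 1/2) at_top"
    by (rule order_tendstoD) simp
  then have "eventually (\<lambda>u. tailL M \<sigma>0 u / tailL M \<sigma>0 u > 1/2 \<and> u \<ge> x) at_top"
    by (intro eventually_conj) (auto simp: eventually_ge_at_top)
  then obtain u where u: "tailL M \<sigma>0 u / tailL M \<sigma>0 u > 1/2" "u \<ge> x"
    using eventually_happens' by (metis (mono_tags, lifting) eventually_at_top_linorder order_refl)
  then have "tailL M \<sigma>0 u \<noteq> 0" by auto
  then have "measure M {\<omega> \<in> space M. \<sigma>0 \<omega> > u} \<noteq> 0" unfolding tailL_def by auto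
  then have "measure M {\<omega> \<in> space M. \<sigma>0 \<omega> > u} > 0" using measure_nonneg[of M] by (simp add: order_less_le)
  also have "measure M {\<omega> \<in> space M. \<sigma>0 \<omega> > u} \<le> measure M {\<omega> \<in> space M. \<sigma>0 \<omega> > x}"
    using u(2) s by (intro finite_measure_mono) auto
  finally show ?thesis .
qed

lemma tail_mono:
  fixes M :: "'a measure" and \<sigma>0 :: "'a \<Rightarrow> real"
  assumes ps: "prob_space M" and s: "\<sigma>0 \<in> borel_measurable M"
    and sv: "slowly_varying (tailL M \<sigma>0)" and xy: "x \<le> y"
  shows "tailL M \<sigma>0 x \<le> tailL M \<sigma>0 y" "tailL M \<sigma>0 x \<ge> 1"
proof -
  interpret prob_space M by fact
  have px: "measure M {\<omega> \<in> space M. \<sigma>0 \<omega> > x} > 0" "measure M {\<omega> \<in> space M. \<sigma>0 \<omega> > y} > 0"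
    using tail_pos[OF ps s sv] by auto
  have "measure M {\<omega> \<in> space M. \<sigma>0 \<omega> > y} \<le> measure M {\<omega> \<in> space M. \<sigma>0 \<omega> > x}"
    using xy s by (intro finite_measure_mono) auto
  then show "tailL M \<sigma>0 x \<le> tailL M \<sigma>0 y" unfolding tailL_def using px
    by (simp add: frac_le)
  show "tailL M \<sigma>0 x \<ge> 1" unfolding tailL_def using px by simp
qed

lemma ell_prop:
  fixes M :: "'a measure" and \<sigma>0 :: "'a \<Rightarrow> real"
  assumes ps: "prob_space M" and s: "\<sigma>0 \<in> borel_measurable M"
    and sv: "slowly_varying (tailL M \<sigma>0)" and t: "t > 0"
  shows "ell (tailL M \<sigma>0) t \<ge> 0" "ell (tailL M \<sigma>0) t * tailL M \<sigma>0 (ell (tailL M \<sigma>0) t) \<ge> t"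
proof -
  interpret prob_space M by fact
  define L where "L = tailL M \<sigma>0"
  define S where "S = {s. s \<ge> 0 \<and> s * L s \<ge> t}"
  define l where "l = ell L t"
  have lS: "l = Inf S" unfolding l_def ell_def S_def by simp
  have L1: "\<And>x. L x \<ge> 1" and Lm: "\<And>x y. x \<le> y \<Longrightarrow> L x \<le> L y"
    using tail_mono[OF ps s sv] unfolding L_def by auto
  have "t \<in> S" unfolding S_def using t L1[of t] by (simp add: mult_le_cancel_left1)
  then have Sne: "S \<noteq> {}" by auto
  have bdd: "bdd_below S" unfolding S_def by (rule bdd_belowI[of _ 0]) auto
  show "ell (tailL M \<sigma>0) t \<ge> 0" unfolding L_def[symmetric] l_def[symmetric] lS
    by (rule cInf_greatest[OF Sne]) (auto simp: S_def)
  then have l0: "l \<ge> 0" by (simp add: l_def L_def)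
  define e where "e n = inverse (real (Suc n))" for n
  have epos: "e n > 0" for n unfolding e_def by simp
  have le: "t \<le> (l + e n) * L (l + e n)" for n
  proof -
    have "Inf S < l + e n" using epos[of n] lS by simp
    then obtain s where sS: "s \<in> S" "s < l + e n" using cInf_lessD[OF Sne] by blast
    have "t \<le> s * L s" using sS unfolding S_def by auto
    also have "\<dots> \<le> (l + e n) * L (l + e n)"
    proof (rule mult_mono)
      show "s \<le> l + e n" using sS(2) by simp
      then show "L s \<le> L (l + e n)" by (rule Lm)
      show "0 \<le> l + e n" using l0 epos[of n] by simp
      show "0 \<le> L s" using L1[of s] by simp
    qed
    finally show ?thesis .
  qed
  define A where "A n = {\<omega> \<in> space M. \<sigma>0 \<omega> > l + e n}" for n
  have Am: "range A \<subseteq> sets M" unfolding A_def using s by auto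
  have emono: "e n \<le> e m" if "m \<le> n" for m n
    unfolding e_def by (rule le_imp_inverse_le) (use that in auto)
  have inc: "incseq A"
  proof (rule incseq_SucI)
    fix n
    have "e (Suc n) \<le> e n" by (rule emono) simp
    then show "A n \<subseteq> A (Suc n)" unfolding A_def by auto
  qed
  have UA: "(\<Union>n. A n) = {\<omega> \<in> space M. \<sigma>0 \<omega> > l}"
  proof safe
    fix \<omega> assume "\<omega> \<in> space M" "\<sigma>0 \<omega> > l"
    then obtain n where "inverse (real (Suc n)) < \<sigma>0 \<omega> - l"
      using reals_Archimedean by (metis diff_gt_0_iff_gt)
    then show "\<omega> \<in> (\<Union>n. A n)" using \<open>\<omega> \<in> space M\<close> unfolding A_def e_def
      by (auto intro!: exI[of _ n])
  next
    fix \<omega> n assume "\<omega> \<in> A n"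
    then show "\<sigma>0 \<omega> > l" using epos[of n] unfolding A_def by auto
  qed (auto simp: A_def)
  have lim1: "(\<lambda>n. measure M (A n)) \<longlonglongrightarrow> measure M {\<omega> \<in> space M. \<sigma>0 \<omega> > l}"
    using finite_Lim_measure_incseq[OF Am inc] UA by simp
  have pl: "measure M {\<omega> \<in> space M. \<sigma>0 \<omega> > l} > 0" using tail_pos[OF ps s sv] by auto
  have lim2: "(\<lambda>n. L (l + e n)) \<longlonglongrightarrow> L l"
  proof -
    have "(\<lambda>n. 1 / measure M (A n)) \<longlonglongrightarrow> 1 / measure M {\<omega> \<in> space M. \<sigma>0 \<omega> > l}"
      by (rule tendsto_divide[OF tendsto_const lim1]) (use pl in simp)
    then show ?thesis unfolding L_def tailL_def A_def .
  qed
  have lime: "e \<longlonglongrightarrow> 0" unfolding e_def by (rule LIMSEQ_inverse_real_of_nat)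
  have "(\<lambda>n. (l + e n) * L (l + e n)) \<longlonglongrightarrow> (l + 0) * L l"
    by (rule tendsto_mult[OF tendsto_add[OF tendsto_const lime] lim2])
  then have "t \<le> (l + 0) * L l" by (rule LIMSEQ_le_const) (use le in auto)
  then show "ell (tailL M \<sigma>0) t * tailL M \<sigma>0 (ell (tailL M \<sigma>0) t) \<ge> t"
    by (simp add: l_def L_def)
qed

theorem proposition3p7:
  fixes M :: "'a measure" and \<sigma>0 :: "'a \<Rightarrow> real" and Y :: "nat \<Rightarrow> 'a \<Rightarrow> real"
    and h :: "real \<Rightarrow> real"
  assumes "prob_space M"
    and "\<sigma>0 \<in> borel_measurable M"
    and "AE \<omega> in M. \<sigma>0 \<omega> > 0"
    and "slowly_varying (tailL M \<sigma>0)"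
    and "\<And>n. Y n \<in> borel_measurable M"
    and "prob_space.indep_vars M (\<lambda>_. borel) Y UNIV"
    and "\<And>n. distr M borel (Y n) = distr M borel \<sigma>0"
    and "filterlim h at_top at_top"
    and "(\<lambda>t. (h t)\<^sup>2) \<in> o(\<lambda>t. rr (tailL M \<sigma>0) t)"
    and "eventually (\<lambda>t.
            tailL M \<sigma>0 (ell (tailL M \<sigma>0) t / (h t)^3)
              > tailL M \<sigma>0 (ell (tailL M \<sigma>0) t) * (1 - 1 / h t)
          \<and> tailL M \<sigma>0 (ell (tailL M \<sigma>0) t * (h t)^3)
              < tailL M \<sigma>0 (ell (tailL M \<sigma>0) t) * (1 + 1 / h t)) at_top"
  shows "((\<lambda>t. measure M {\<omega> \<in> space M.
            Y (first_exc Y (ell (tailL M \<sigma>0) t) \<omega>) \<omega>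
              > t * (h t)\<^sup>2 / rr (tailL M \<sigma>0) t}) \<longlongrightarrow> 1) at_top"
proof -
  note ps = assms(1) and s = assms(2) and sv = assms(4) and Ym = assms(5)
    and ind = assms(6) and dist = assms(7) and hlim = assms(8) and cond = assms(10)
  interpret prob_space M by fact
  define L where "L = tailL M \<sigma>0"
  define P where "P x = measure M {\<omega> \<in> space M. \<sigma>0 \<omega> > x}" for x
  have Ppos: "P x > 0" for x unfolding P_def by (rule tail_pos[OF ps s sv])
  have LP: "L x = 1 / P x" for x unfolding L_def P_def tailL_def ..
  have Lm: "x \<le> y \<Longrightarrow> L x \<le> L y" for x y unfolding L_def by (rule tail_mono[OF ps s sv])
  have Lpos: "L x > 0" for x using LP Ppos by simp
  define E where "E t = measure M {\<omega> \<in> space M.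
            Y (first_exc Y (ell (tailL M \<sigma>0) t) \<omega>) \<omega> > t * (h t)\<^sup>2 / rr (tailL M \<sigma>0) t}" for t
  have ev: "eventually (\<lambda>t. t > 0 \<and> h t \<ge> 2 \<and>
          L (ell L t * (h t)^3) < L (ell L t) * (1 + 1 / h t)) at_top"
  proof -
    have e1: "eventually (\<lambda>t. t > (0::real)) at_top" by (rule eventually_gt_at_top)
    have e2: "eventually (\<lambda>t. h t \<ge> 2) at_top" using hlim by (simp add: filterlim_at_top)
    have e3: "eventually (\<lambda>t. L (ell L t * (h t)^3) < L (ell L t) * (1 + 1 / h t)) at_top"
      using cond unfolding L_def by (rule eventually_mono) (rule conjunct2)
    show ?thesis using e1 e2 e3 by (rule eventually_conj[OF _ eventually_conj])
  qed
  have lower: "eventually (\<lambda>t. 1 / (1 + 1 / h t) \<le> E t) at_top"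
    using ev
  proof (rule eventually_mono)
    fix t assume t: "t > 0 \<and> h t \<ge> 2 \<and> L (ell L t * (h t)^3) < L (ell L t) * (1 + 1 / h t)"
    define l where "l = ell L t"
    define T where "T = t * (h t)\<^sup>2 / rr (tailL M \<sigma>0) t"
    define x where "x = max T l"
    have l0: "l \<ge> 0" and lL: "l * L l \<ge> t" using ell_prop[OF ps s sv, of t] t unfolding l_def L_def by auto
    have TL: "T = t * (h t)^2 / L l" unfolding T_def rr_def l_def L_def ..
    have h1: "h t \<ge> 1" using t by simp
    have "T \<le> l * L l * (h t)^2 / L l" unfolding TL
      using lL Lpos[of l] by (intro divide_right_mono mult_right_mono) auto
    also have "\<dots> = l * (h t)^2" using Lpos[of l] by simp
    also have "\<dots> \<le> l * (h t)^3" using l0 h1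
      by (intro mult_left_mono) (auto simp: power_increasing)
    finally have T3: "T \<le> l * (h t)^3" .
    have "l \<le> l * (h t)^3" using l0 h1 by (simp add: mult_le_cancel_left1 one_le_power)
    with T3 have x3: "x \<le> l * (h t)^3" unfolding x_def by simp
    have "L x \<le> L (l * (h t)^3)" using Lm[OF x3] .
    also have "\<dots> < L l * (1 + 1 / h t)" using t unfolding l_def by simp
    finally have Lx: "L x < L l * (1 + 1 / h t)" .
    have "P x / P l \<le> measure M {\<omega> \<in> space M. Y (first_exc Y l \<omega>) \<omega> > T}" unfolding P_def
      by (rule lower_bound[OF ps s Ym ind dist]) (simp_all add: x_def tail_pos[OF ps s sv])
    moreover have "measure M {\<omega> \<in> space M. Y (first_exc Y l \<omega>) \<omega> > T} = E t"
      unfolding E_def T_def l_def L_def ..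
    ultimately have "P x / P l \<le> E t" by simp
    moreover have "P x / P l = L l / L x" unfolding LP using Ppos[of x] Ppos[of l] by (simp add: field_simps)
    moreover have "1 / (1 + 1 / h t) \<le> L l / L x"
    proof -
      have hp: "1 + 1 / h t > 0" using t by (simp add: add_pos_pos)
      have "1 / (1 + 1 / h t) = L l / (L l * (1 + 1 / h t))" using Lpos[of l] hp by simp
      also have "\<dots> \<le> L l / L x"
      proof (rule divide_left_mono)
        show "L x \<le> L l * (1 + 1 / h t)" using Lx by simp
        show "0 \<le> L l" using Lpos[of l] by simp
        show "0 < L l * (1 + 1 / h t) * L x" using Lpos[of l] Lpos[of x] hp by simp
      qed
      finally show ?thesis .
    qed
    ultimately show "1 / (1 + 1 / h t) \<le> E t" by linarith
  qed
  have upper: "eventually (\<lambda>t. E t \<le> 1) at_top" unfolding E_def by (intro always_eventually allI prob_le_1)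
  have ih: "((\<lambda>t. inverse (h t)) \<longlongrightarrow> 0) at_top" by (rule tendsto_inverse_0_at_top[OF hlim])
  have "((\<lambda>t. 1 / (1 + inverse (h t))) \<longlongrightarrow> 1 / (1 + 0)) at_top"
    by (rule tendsto_divide[OF tendsto_const tendsto_add[OF tendsto_const ih]]) simp
  then have lim: "((\<lambda>t. 1 / (1 + 1 / h t)) \<longlongrightarrow> 1) at_top" by (simp add: inverse_eq_divide)
  have "(E \<longlongrightarrow> 1) at_top"
    by (rule tendsto_sandwich[OF lower upper lim tendsto_const])
  then show ?thesis unfolding E_def .
qed

end
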